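(* Let $\pi$ be a projective plane of order $q$, and let $n,s,t\in\mathbb{N}$ be such that $q=(n+1)^2$ and $q\ge s,t>q-n$. Then, for $s\ne t$, \[ n_\pi(K_{s,t})=2\binom{q^2+q+1}{2}\binom{q}{s}\binom{q}{t}, \] and \[ n_\pi(K_{s,s})=\binom{q^2+q+1}{2}\binom{q}{s}^2. \]
   Context: $K_{s,t}$ is the complete bipartite graph with classes of sizes $s,t$. A finite projective plane of order $q$ has $q^2+q+1$ points and lines, $q+1$ points on each line and $q+1$ lines through each point; any two distinct points lie on a unique line and any two lines meet in a unique point. An embedding of a simple graph $G=(V,E)$ into $\pi$ is an injective map $\phi$ from $V$ to the points of $\pi$ such that the induced map sending an edge $ab$ to the line through $\phi(a),\phi(b)$ is injective on $E$. Two embeddings $\phi,\psi$ are equivalent if $\psi=\phi\circ\alpha$ for some graph automorphism $\alpha$ of $G$; $n_\pi(G)$ is the number of equivalence classes (equivalently, the number of distinct images of $G$ in $\pi$). *)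

theory Defs
  imports Main "HOL-Library.FuncSet"
begin

definition projective_plane :: "'p set \<Rightarrow> 'l set \<Rightarrow> ('p \<Rightarrow> 'l \<Rightarrow> bool) \<Rightarrow> nat \<Rightarrow> bool" where
  "projective_plane P L inc q \<longleftrightarrow>
     finite P \<and> finite L \<and>
     card P = q^2 + q + 1 \<and> card L = q^2 + q + 1 \<and>
     (\<forall>l\<in>L. card {p\<in>P. inc p l} = q + 1) \<and>
     (\<forall>p\<in>P. card {l\<in>L. inc p l} = q + 1) \<and>
     (\<forall>p\<in>P. \<forall>p'\<in>P. p \<noteq> p' \<longrightarrow> (\<exists>!l. l \<in> L \<and> inc p l \<and> inc p' l)) \<and>
     (\<forall>l\<in>L. \<forall>l'\<in>L. l \<noteq> l' \<longrightarrow> (\<exists>!p. p \<in> P \<and> inc p l \<and> inc p l'))"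

definition edge_line :: "'l set \<Rightarrow> ('p \<Rightarrow> 'l \<Rightarrow> bool) \<Rightarrow> ('v \<Rightarrow> 'p) \<Rightarrow> 'v set \<Rightarrow> 'l" where
  "edge_line L inc \<phi> e = (THE l. l \<in> L \<and> (\<forall>x\<in>e. inc (\<phi> x) l))"

definition is_embedding :: "'p set \<Rightarrow> 'l set \<Rightarrow> ('p \<Rightarrow> 'l \<Rightarrow> bool) \<Rightarrow> 'v set \<Rightarrow> 'v set set \<Rightarrow> ('v \<Rightarrow> 'p) \<Rightarrow> bool" where
  "is_embedding P L inc V E \<phi> \<longleftrightarrow>
     inj_on \<phi> V \<and> \<phi> ` V \<subseteq> P \<and> inj_on (edge_line L inc \<phi>) E"

definition embeddings :: "'p set \<Rightarrow> 'l set \<Rightarrow> ('p \<Rightarrow> 'l \<Rightarrow> bool) \<Rightarrow> 'v set \<Rightarrow> 'v set set \<Rightarrow> ('v \<Rightarrow> 'p) set" where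
  "embeddings P L inc V E = {\<phi>. \<phi> \<in> extensional V \<and> is_embedding P L inc V E \<phi>}"

definition graph_aut :: "'v set \<Rightarrow> 'v set set \<Rightarrow> ('v \<Rightarrow> 'v) \<Rightarrow> bool" where
  "graph_aut V E \<alpha> \<longleftrightarrow> bij_betw \<alpha> V V \<and>
     (\<forall>a\<in>V. \<forall>b\<in>V. {a, b} \<in> E \<longleftrightarrow> {\<alpha> a, \<alpha> b} \<in> E)"

definition emb_equiv :: "'p set \<Rightarrow> 'l set \<Rightarrow> ('p \<Rightarrow> 'l \<Rightarrow> bool) \<Rightarrow> 'v set \<Rightarrow> 'v set set \<Rightarrow> (('v \<Rightarrow> 'p) \<times> ('v \<Rightarrow> 'p)) set" where
  "emb_equiv P L inc V E = {(\<phi>, \<psi>). \<phi> \<in> embeddings P L inc V E \<and> \<psi> \<in> embeddings P L inc V E \<and>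
     (\<exists>\<alpha>. graph_aut V E \<alpha> \<and> (\<forall>v\<in>V. \<psi> v = \<phi> (\<alpha> v)))}"

definition n_pi :: "'p set \<Rightarrow> 'l set \<Rightarrow> ('p \<Rightarrow> 'l \<Rightarrow> bool) \<Rightarrow> 'v set \<Rightarrow> 'v set set \<Rightarrow> nat" where
  "n_pi P L inc V E = card (embeddings P L inc V E // emb_equiv P L inc V E)"

definition K_V :: "nat \<Rightarrow> nat \<Rightarrow> (nat + nat) set" where
  "K_V s t = Inl ` {..<s} \<union> Inr ` {..<t}"

definition K_E :: "nat \<Rightarrow> nat \<Rightarrow> (nat + nat) set set" where
  "K_E s t = {{Inl i, Inr j} | i j. i < s \<and> j < t}"

end

theory Submission
  imports Defs
begin

locale pp =
  fixes P :: "'p set" and L :: "'l set" and inc :: "'p \<Rightarrow> 'l \<Rightarrow> bool" and q :: nat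
  assumes plane: "projective_plane P L inc q"
begin

definition pts :: "'l \<Rightarrow> 'p set" where "pts l = {p\<in>P. inc p l}"
definition ln :: "'p \<Rightarrow> 'p \<Rightarrow> 'l" where "ln a b = (THE l. l \<in> L \<and> inc a l \<and> inc b l)"

lemma finP: "finite P" and finL: "finite L" and cardP: "card P = q^2+q+1" and cardL: "card L = q^2+q+1"
  using plane unfolding projective_plane_def by auto

lemma card_pts: "l \<in> L \<Longrightarrow> card (pts l) = q + 1"
  using plane unfolding projective_plane_def pts_def by auto

lemma card_pencil: "p \<in> P \<Longrightarrow> card {l\<in>L. inc p l} = q + 1"
  using plane unfolding projective_plane_def by auto

lemma ex1_line: "a \<in> P \<Longrightarrow> b \<in> P \<Longrightarrow> a \<noteq> b \<Longrightarrow> \<exists>!l. l \<in> L \<and> inc a l \<and> inc b l"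
  using plane unfolding projective_plane_def by auto

lemma ex1_pt: "l \<in> L \<Longrightarrow> m \<in> L \<Longrightarrow> l \<noteq> m \<Longrightarrow> \<exists>!p. p \<in> P \<and> inc p l \<and> inc p m"
  using plane unfolding projective_plane_def by auto

lemma ln: assumes "a \<in> P" "b \<in> P" "a \<noteq> b"
  shows "ln a b \<in> L" "inc a (ln a b)" "inc b (ln a b)"
  using theI'[OF ex1_line[OF assms]] unfolding ln_def by auto

lemma ln_unique: assumes "a \<in> P" "b \<in> P" "a \<noteq> b" "l \<in> L" "inc a l" "inc b l"
  shows "l = ln a b"
  using ex1_line[OF assms(1-3)] ln[OF assms(1-3)] assms(4-6) by blast

lemma ln_sym: assumes "a \<in> P" "b \<in> P" "a \<noteq> b" shows "ln a b = ln b a"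
  using ln[OF assms] ln_unique[of b a "ln a b"] assms by auto

lemma two_pts: assumes "a \<in> P" "b \<in> P" "a \<noteq> b" "l \<in> L" "inc a l" "inc b l" "m \<in> L" "inc a m" "inc b m"
  shows "l = m"
proof -
  have "l = ln a b" by (rule ln_unique[OF assms(1-6)])
  moreover have "m = ln a b" by (rule ln_unique[OF assms(1-3) assms(7-9)])
  ultimately show ?thesis by simp
qed

lemma meet_card: assumes "l \<in> L" "m \<in> L" "l \<noteq> m" shows "card (pts l \<inter> pts m) = 1"
proof -
  obtain p where p: "p \<in> P \<and> inc p l \<and> inc p m" and u: "\<forall>x. x \<in> P \<and> inc x l \<and> inc x m \<longrightarrow> x = p"
    using ex1_pt[OF assms] by (elim ex1E) blast
  have "pts l \<inter> pts m = {p}"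
  proof
    show "pts l \<inter> pts m \<subseteq> {p}" using u unfolding pts_def by blast
    show "{p} \<subseteq> pts l \<inter> pts m" using p unfolding pts_def by blast
  qed
  then show ?thesis by simp
qed

lemma card_pts_diff: assumes "l \<in> L" "m \<in> L" "l \<noteq> m" shows "card (pts l - pts m) = q"
proof -
  have "finite (pts l)" unfolding pts_def using finP by simp
  have "card (pts l - pts m) = card (pts l) - card (pts l \<inter> pts m)"
    by (rule card_Diff_subset_Int) (use \<open>finite (pts l)\<close> in blast)
  then show ?thesis using card_pts[OF assms(1)] meet_card[OF assms] by simp
qed

lemma edge_line_eq: assumes "\<phi> u \<in> P" "\<phi> v \<in> P" "\<phi> u \<noteq> \<phi> v"
  shows "edge_line L inc \<phi> {u, v} = ln (\<phi> u) (\<phi> v)"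
  unfolding edge_line_def ln_def by simp

lemma collinear:
  assumes n1: "1 \<le> n" and q: "q = (n+1)^2"
    and AP: "A \<subseteq> P" and finA: "finite A" and cA: "q - n < card A"
    and BP: "B \<subseteq> P" and cB: "q - n < card B"
    and disj: "A \<inter> B = {}"
    and good: "\<forall>a\<in>A. \<forall>a'\<in>A. \<forall>b\<in>B. \<forall>b'\<in>B. ln a b = ln a' b' \<longrightarrow> a = a' \<and> b = b'"
  shows "\<exists>l\<in>L. B \<subseteq> pts l"
proof (rule ccontr)
  assume nc: "\<not> (\<exists>l\<in>L. B \<subseteq> pts l)"
  define D where "D b = {l\<in>L. inc b l \<and> (\<exists>b'\<in>B. b'\<noteq>b \<and> inc b' l)}" for b
  have finB: "finite B" using BP finP finite_subset by blast
  have Dfin: "finite (D b)" for b unfolding D_def using finL by simp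
  have Dcard: "card (D b) \<le> n" if bB: "b \<in> B" for b
  proof -
    define Lb where "Lb = {l\<in>L. inc b l}"
    have bP: "b \<in> P" using bB BP by auto
    have cLb: "card Lb = q + 1" unfolding Lb_def using card_pencil[OF bP] .
    have anb: "a \<in> A \<Longrightarrow> a \<noteq> b" for a using disj bB by auto
    have sub1: "(\<lambda>a. ln a b) ` A \<subseteq> Lb" unfolding Lb_def using ln[of _ b] AP bP anb by auto
    have inj1: "inj_on (\<lambda>a. ln a b) A"
    proof (rule inj_onI)
      fix a a' assume "a \<in> A" "a' \<in> A" "ln a b = ln a' b"
      then show "a = a'" using good[rule_format, of a a' b b] bB by simp
    qed
    have sub2: "D b \<subseteq> Lb" unfolding D_def Lb_def by auto
    have dis: "D b \<inter> (\<lambda>a. ln a b) ` A = {}"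
    proof (rule ccontr)
      assume "D b \<inter> (\<lambda>a. ln a b) ` A \<noteq> {}"
      then obtain a b' where aA: "a \<in> A" and b'B: "b' \<in> B" and "b' \<noteq> b" and i: "inc b' (ln a b)"
        unfolding D_def by auto
      have aP: "a \<in> P" using aA AP by auto
      have b'P: "b' \<in> P" using b'B BP by auto
      have "a \<noteq> b'" using disj aA b'B by auto
      then have "ln a b = ln a b'" using ln_unique[OF aP b'P] ln[OF aP bP anb[OF aA]] i by blast
      then show False using good[rule_format, of a a b b'] aA b'B bB \<open>b' \<noteq> b\<close> by simp
    qed
    have finLb: "finite Lb" unfolding Lb_def using finL by simp
    have "card (D b \<union> (\<lambda>a. ln a b) ` A) = card (D b) + card A"
      using card_Un_disjoint[OF Dfin finite_imageI[OF finA] dis] card_image[OF inj1] by simp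
    moreover have "card (D b \<union> (\<lambda>a. ln a b) ` A) \<le> card Lb"
      using card_mono[OF finLb] sub1 sub2 by auto
    ultimately have "card (D b) + card A \<le> q + 1" using cLb by simp
    then show ?thesis using cA by linarith
  qed
  have Mcard: "card (pts l \<inter> B) \<le> n" if lL: "l \<in> L" for l
  proof -
    have "\<not> B \<subseteq> pts l" using nc lL by blast
    then obtain c where cB': "c \<in> B" and cl0: "c \<notin> pts l" by blast
    have cP: "c \<in> P" using cB' BP by auto
    have cl: "\<not> inc c l" using cl0 cP unfolding pts_def by simp
    have "inj_on (ln c) (pts l \<inter> B)"
    proof (rule inj_onI)
      fix x y assume x: "x \<in> pts l \<inter> B" and y: "y \<in> pts l \<inter> B" and e: "ln c x = ln c y"
      show "x = y"
      proof (rule ccontr)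
        assume "x \<noteq> y"
        have xP: "x \<in> P" and yP: "y \<in> P" and xl: "inc x l" and yl: "inc y l"
          using x y unfolding pts_def by auto
        have "c \<noteq> x" "c \<noteq> y" using cl xl yl by auto
        have i1: "inc y (ln c x)" using e ln[OF cP yP \<open>c \<noteq> y\<close>] by simp
        have "l = ln c x" by (rule two_pts[OF xP yP \<open>x \<noteq> y\<close> lL xl yl ln(1)[OF cP xP \<open>c \<noteq> x\<close>] ln(3)[OF cP xP \<open>c \<noteq> x\<close>] i1])
        then show False using cl ln[OF cP xP \<open>c \<noteq> x\<close>] by simp
      qed
    qed
    moreover have "ln c ` (pts l \<inter> B) \<subseteq> D c"
    proof
      fix k assume "k \<in> ln c ` (pts l \<inter> B)"
      then obtain x where x: "x \<in> pts l \<inter> B" and k: "k = ln c x" by auto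
      have xP: "x \<in> P" and xl: "inc x l" using x unfolding pts_def by auto
      have "c \<noteq> x" using cl xl by auto
      then show "k \<in> D c" unfolding D_def k using ln[OF cP xP] x by auto
    qed
    ultimately have "card (pts l \<inter> B) \<le> card (D c)" using card_inj_on_le Dfin by blast
    then show ?thesis using Dcard[OF cB'] by simp
  qed
  have "B \<noteq> {}" using cB by auto
  then obtain b where bB: "b \<in> B" by auto
  have bP: "b \<in> P" using bB BP by auto
  have cov: "B - {b} \<subseteq> (\<Union>l\<in>D b. pts l \<inter> B - {b})"
  proof
    fix x assume x: "x \<in> B - {b}"
    then have xP: "x \<in> P" using BP by auto
    have "b \<noteq> x" using x by auto
    then have "ln b x \<in> D b" unfolding D_def using ln[OF bP xP] x by auto
    moreover have "x \<in> pts (ln b x) \<inter> B - {b}" using ln[OF bP xP \<open>b \<noteq> x\<close>] x xP unfolding pts_def by auto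
    ultimately show "x \<in> (\<Union>l\<in>D b. pts l \<inter> B - {b})" by blast
  qed
  have "card (B - {b}) \<le> card (\<Union>l\<in>D b. pts l \<inter> B - {b})"
    by (rule card_mono[OF _ cov]) (use Dfin finB in auto)
  also have "\<dots> \<le> (\<Sum>l\<in>D b. card (pts l \<inter> B - {b}))" by (rule card_UN_le[OF Dfin])
  also have "\<dots> \<le> (\<Sum>l\<in>D b. n - 1)"
  proof (rule sum_mono)
    fix l assume l: "l \<in> D b"
    then have "b \<in> pts l \<inter> B" unfolding D_def pts_def using bB bP by auto
    then have "card (pts l \<inter> B - {b}) = card (pts l \<inter> B) - 1" using finB by simp
    then show "card (pts l \<inter> B - {b}) \<le> n - 1" using Mcard[of l] l unfolding D_def by auto
  qed
  also have "\<dots> = card (D b) * (n - 1)" by simp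
  also have "\<dots> \<le> n * (n - 1)" using Dcard[OF bB] by simp
  finally have le: "card (B - {b}) \<le> n * (n - 1)" .
  have e0: "card (B - {b}) = card B - 1" by (rule card_Diff_singleton[OF bB])
  have "card B \<noteq> 0" using bB finB by auto
  then have "card B \<ge> 1" by simp
  then have e1: "card (B - {b}) + 1 = card B" using e0 by linarith
  have qn: "q = n*n + 2*n + 1" using q by (simp add: power2_eq_square algebra_simps)
  have e2: "n*n + n + 1 < card B" using cB qn by linarith
  have e3: "n * (n - 1) \<le> n * n" by simp
  have e4: "n * (n - 1) < card (B - {b})"
  proof -
    have "n * (n - 1) < n*n + n + 1" using e3 by linarith
    then show ?thesis using e1 e2 by linarith
  qed
  show False using le e4 by linarith
qed

end


lemma KE_iff: assumes "u \<in> K_V s t" "v \<in> K_V s t"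
  shows "{u,v} \<in> K_E s t \<longleftrightarrow> isl u \<noteq> isl v"
  using assms unfolding K_V_def K_E_def by (cases u; cases v) (auto simp: doubleton_eq_iff)

lemma VL_eq: "Inl ` {..<s} = {v \<in> K_V s t. isl v}"
  unfolding K_V_def by (rule set_eqI, case_tac x) auto

lemma VR_eq: "Inr ` {..<t} = {v \<in> K_V s t. \<not> isl v}"
  unfolding K_V_def by (rule set_eqI, case_tac x) auto

lemma card_quotient_fun:
  assumes "R \<subseteq> X \<times> X" "\<And>x y. x \<in> X \<Longrightarrow> y \<in> X \<Longrightarrow> (x,y) \<in> R \<longleftrightarrow> f x = f y"
  shows "card (X // R) = card (f ` X)"
proof -
  have cl: "R `` {x} = {y\<in>X. f y = f x}" if "x \<in> X" for x
    using assms that by auto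
  have "X // R = (\<lambda>z. {y\<in>X. f y = z}) ` (f ` X)"
    unfolding quotient_def using cl by auto
  moreover have "inj_on (\<lambda>z. {y\<in>X. f y = z}) (f ` X)"
  proof (rule inj_onI)
    fix z z' assume "z \<in> f ` X" "z' \<in> f ` X" and e: "{y\<in>X. f y = z} = {y\<in>X. f y = z'}"
    then obtain x where "x \<in> X" "f x = z" by auto
    then show "z = z'" using e by blast
  qed
  ultimately show ?thesis by (simp add: card_image)
qed

lemma card_sym_pairs:
  assumes fin: "finite X" and sym: "\<And>A B. (A,B) \<in> X \<Longrightarrow> (B,A) \<in> X"
    and ne: "\<And>A B. (A,B) \<in> X \<Longrightarrow> A \<noteq> B"
  shows "card X = 2 * card ((\<lambda>(A,B). {A,B}) ` X)"
proof -
  let ?G = "\<lambda>(A,B). {A,B}"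
  have X: "X = (\<Union>S\<in>?G ` X. {x\<in>X. ?G x = S})" by auto
  have fib: "card {x\<in>X. ?G x = S} = 2" if "S \<in> ?G ` X" for S
  proof -
    obtain A B where AB: "(A,B) \<in> X" "S = {A,B}" using \<open>S \<in> ?G ` X\<close> by auto
    have "{x\<in>X. ?G x = S} = {(A,B),(B,A)}"
      using AB sym by (auto simp: doubleton_eq_iff)
    then show ?thesis using ne[OF AB(1)] by simp
  qed
  have "card X = (\<Sum>S\<in>?G ` X. card {x\<in>X. ?G x = S})"
    by (subst X, rule card_UN_disjoint) (use fin in auto)
  also have "\<dots> = (\<Sum>S\<in>?G ` X. 2)" using fib by simp
  finally show ?thesis by simp
qed

definition FF :: "nat \<Rightarrow> nat \<Rightarrow> (nat + nat \<Rightarrow> 'p) \<Rightarrow> 'p set set" where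
  "FF s t \<phi> = {\<phi> ` Inl ` {..<s}, \<phi> ` Inr ` {..<t}}"

lemma aut_sides:
  assumes aut: "graph_aut (K_V s t) (K_E s t) \<alpha>" and s0: "0 < s"
  shows "\<exists>c. \<forall>v\<in>K_V s t. isl (\<alpha> v) = (isl v = c)"
proof -
  let ?V = "K_V s t"
  have bij: "bij_betw \<alpha> ?V ?V" and ed: "\<forall>a\<in>?V. \<forall>b\<in>?V. {a, b} \<in> K_E s t \<longleftrightarrow> {\<alpha> a, \<alpha> b} \<in> K_E s t"
    using aut unfolding graph_aut_def by auto
  have into: "v \<in> ?V \<Longrightarrow> \<alpha> v \<in> ?V" for v using bij bij_betwE by blast
  have pres: "isl (\<alpha> u) \<noteq> isl (\<alpha> v) \<longleftrightarrow> isl u \<noteq> isl v" if "u \<in> ?V" "v \<in> ?V" for u v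
    using ed that KE_iff[OF that] KE_iff[OF into[OF that(1)] into[OF that(2)]] by blast
  have u0: "Inl 0 \<in> ?V" using s0 unfolding K_V_def by auto
  show ?thesis
    by (rule exI[of _ "isl (\<alpha> (Inl 0))"]) (use pres[OF u0] in auto)
qed

lemma equiv_iff:
  assumes s0: "0 < s" and \<phi>: "\<phi> \<in> embeddings P L inc (K_V s t) (K_E s t)"
    and \<psi>: "\<psi> \<in> embeddings P L inc (K_V s t) (K_E s t)"
  shows "(\<phi>,\<psi>) \<in> emb_equiv P L inc (K_V s t) (K_E s t) \<longleftrightarrow> FF s t \<phi> = FF s t \<psi>"
proof
  let ?V = "K_V s t"
  assume "(\<phi>,\<psi>) \<in> emb_equiv P L inc (K_V s t) (K_E s t)"
  then obtain \<alpha> where aut: "graph_aut ?V (K_E s t) \<alpha>" and eq: "\<forall>v\<in>?V. \<psi> v = \<phi> (\<alpha> v)"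
    unfolding emb_equiv_def by auto
  obtain c where c: "\<forall>v\<in>?V. isl (\<alpha> v) = (isl v = c)" using aut_sides[OF aut s0] by blast
  have bij: "bij_betw \<alpha> ?V ?V" using aut unfolding graph_aut_def by auto
  have img: "\<alpha> ` {v\<in>?V. isl v = d} = {w\<in>?V. isl w = (d = c)}" for d
  proof
    show "\<alpha> ` {v\<in>?V. isl v = d} \<subseteq> {w\<in>?V. isl w = (d = c)}"
      using c bij bij_betwE by fastforce
  next
    show "{w\<in>?V. isl w = (d = c)} \<subseteq> \<alpha> ` {v\<in>?V. isl v = d}"
    proof
      fix w assume w: "w \<in> {w\<in>?V. isl w = (d = c)}"
      then obtain v where "v \<in> ?V" "w = \<alpha> v" using bij unfolding bij_betw_def by auto
      then show "w \<in> \<alpha> ` {v\<in>?V. isl v = d}" using w c by auto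
    qed
  qed
  have pimg: "\<psi> ` {v\<in>?V. isl v = d} = \<phi> ` {w\<in>?V. isl w = (d = c)}" for d
  proof -
    have "\<psi> ` {v\<in>?V. isl v = d} = \<phi> ` (\<alpha> ` {v\<in>?V. isl v = d})"
      using eq by (auto simp: image_image intro: image_cong)
    then show ?thesis using img by simp
  qed
  have L1: "Inl ` {..<s} = {v\<in>?V. isl v = True}" using VL_eq by simp
  have R1: "Inr ` {..<t} = {v\<in>?V. isl v = False}" using VR_eq by simp
  show "FF s t \<phi> = FF s t \<psi>"
    unfolding FF_def L1 R1 pimg by (cases c) auto
next
  let ?V = "K_V s t"
  assume F: "FF s t \<phi> = FF s t \<psi>"
  have injp: "inj_on \<phi> ?V" and injq: "inj_on \<psi> ?V"
    using \<phi> \<psi> unfolding embeddings_def is_embedding_def by auto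
  have L1: "Inl ` {..<s} = {v\<in>?V. isl v = True}" using VL_eq by simp
  have R1: "Inr ` {..<t} = {v\<in>?V. isl v = False}" using VR_eq by simp
  have "\<exists>c. \<forall>d. \<psi> ` {v\<in>?V. isl v = d} = \<phi> ` {w\<in>?V. isl w = (d = c)}"
  proof -
    from F have "(\<phi> ` Inl ` {..<s} = \<psi> ` Inl ` {..<s} \<and> \<phi> ` Inr ` {..<t} = \<psi> ` Inr ` {..<t}) \<or>
       (\<phi> ` Inl ` {..<s} = \<psi> ` Inr ` {..<t} \<and> \<phi> ` Inr ` {..<t} = \<psi> ` Inl ` {..<s})"
      unfolding FF_def by (simp add: doubleton_eq_iff)
    then show ?thesis
    proof
      assume h: "\<phi> ` Inl ` {..<s} = \<psi> ` Inl ` {..<s} \<and> \<phi> ` Inr ` {..<t} = \<psi> ` Inr ` {..<t}"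
      show ?thesis
      proof (rule exI[of _ True], intro allI)
        fix d show "\<psi> ` {v\<in>?V. isl v = d} = \<phi> ` {w\<in>?V. isl w = (d = True)}"
          using h unfolding L1 R1 by (cases d) auto
      qed
    next
      assume h: "\<phi> ` Inl ` {..<s} = \<psi> ` Inr ` {..<t} \<and> \<phi> ` Inr ` {..<t} = \<psi> ` Inl ` {..<s}"
      show ?thesis
      proof (rule exI[of _ False], intro allI)
        fix d show "\<psi> ` {v\<in>?V. isl v = d} = \<phi> ` {w\<in>?V. isl w = (d = False)}"
          using h unfolding L1 R1 by (cases d) auto
      qed
    qed
  qed
  then obtain c where c: "\<And>d. \<psi> ` {v\<in>?V. isl v = d} = \<phi> ` {w\<in>?V. isl w = (d = c)}" by blast
  have Vsplit: "?V = {v\<in>?V. isl v = True} \<union> {v\<in>?V. isl v = False}" by auto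
  have imV: "\<psi> ` ?V = \<phi> ` ?V"
    by (subst (1 2) Vsplit) (simp only: image_Un c, auto)
  define \<alpha> where "\<alpha> v = inv_into ?V \<phi> (\<psi> v)" for v
  have pv: "\<psi> v \<in> \<phi> ` ?V" if "v \<in> ?V" for v using that imV by blast
  have \<alpha>V: "\<alpha> v \<in> ?V" and \<alpha>eq: "\<phi> (\<alpha> v) = \<psi> v" if "v \<in> ?V" for v
    unfolding \<alpha>_def using inv_into_into[OF pv[OF that]] f_inv_into_f[OF pv[OF that]] by auto
  have \<alpha>isl: "isl (\<alpha> v) = (isl v = c)" if v: "v \<in> ?V" for v
  proof -
    have "\<psi> v \<in> \<psi> ` {u\<in>?V. isl u = isl v}" using v by auto
    then obtain w where w: "w \<in> ?V" "isl w = (isl v = c)" "\<psi> v = \<phi> w" using c by blast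
    then show ?thesis using inj_onD[OF injp _ \<alpha>V[OF v] w(1)] \<alpha>eq[OF v] w(2) by simp
  qed
  have bij: "bij_betw \<alpha> ?V ?V"
    unfolding bij_betw_def
  proof
    show "inj_on \<alpha> ?V"
    proof (rule inj_onI)
      fix u v assume uv: "u \<in> ?V" "v \<in> ?V" "\<alpha> u = \<alpha> v"
      then have "\<psi> u = \<psi> v" using \<alpha>eq[OF uv(1)] \<alpha>eq[OF uv(2)] by simp
      then show "u = v" using inj_onD[OF injq] uv(1,2) by blast
    qed
    show "\<alpha> ` ?V = ?V"
    proof
      show "\<alpha> ` ?V \<subseteq> ?V" using \<alpha>V by auto
      show "?V \<subseteq> \<alpha> ` ?V"
      proof
        fix w assume w: "w \<in> ?V"
        then obtain v where v: "v \<in> ?V" "\<phi> w = \<psi> v" using imV by (metis imageE imageI)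
        then have "\<alpha> v = w" using inj_onD[OF injp _ \<alpha>V[OF v(1)] w] \<alpha>eq[OF v(1)] by simp
        then show "w \<in> \<alpha> ` ?V" using v by auto
      qed
    qed
  qed
  have aut: "graph_aut ?V (K_E s t) \<alpha>"
    unfolding graph_aut_def
  proof (intro conjI bij ballI)
    fix a b assume a: "a \<in> ?V" and b: "b \<in> ?V"
    show "{a, b} \<in> K_E s t \<longleftrightarrow> {\<alpha> a, \<alpha> b} \<in> K_E s t"
      using KE_iff[OF a b] KE_iff[OF \<alpha>V[OF a] \<alpha>V[OF b]] \<alpha>isl[OF a] \<alpha>isl[OF b] by auto
  qed
  show "(\<phi>,\<psi>) \<in> emb_equiv P L inc (K_V s t) (K_E s t)"
    unfolding emb_equiv_def using \<phi> \<psi> aut \<alpha>eq by auto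
qed



lemma two_elems: "2 \<le> card A \<Longrightarrow> \<exists>x y. x \<in> A \<and> y \<in> A \<and> x \<noteq> y"
proof -
  assume c: "2 \<le> card A"
  then have "A \<noteq> {}" by auto
  then obtain x where x: "x \<in> A" by auto
  have "finite A" using c card.infinite by fastforce
  then have "card (A - {x}) \<ge> 1" using c x by simp
  then obtain y where "y \<in> A - {x}" by (metis card.empty ex_in_conv not_one_le_zero)
  then show ?thesis using x by blast
qed

context pp begin

definition Opairs :: "nat \<Rightarrow> nat \<Rightarrow> ('p set \<times> 'p set) set" where
  "Opairs s t = {(A,B). \<exists>l\<in>L. \<exists>m\<in>L. l \<noteq> m \<and> A \<subseteq> pts l - pts m \<and> B \<subseteq> pts m - pts l \<and> card A = s \<and> card B = t}"

lemma good_lines: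
  assumes l: "l \<in> L" and m: "m \<in> L" and A: "A \<subseteq> pts l - pts m" and B: "B \<subseteq> pts m - pts l"
    and a: "a \<in> A" "a' \<in> A" and b: "b \<in> B" "b' \<in> B" and e: "ln a b = ln a' b'"
  shows "a = a' \<and> b = b'"
proof -
  have P: "a \<in> P" "a' \<in> P" "b \<in> P" "b' \<in> P" using A B a b unfolding pts_def by auto
  have I: "inc a l" "inc a' l" "inc b m" "inc b' m" "\<not> inc a m" "\<not> inc a' m" "\<not> inc b l" "\<not> inc b' l"
    using A B a b P unfolding pts_def by auto
  have ne: "a \<noteq> b" "a' \<noteq> b'" using I by auto
  note l1 = ln[OF P(1) P(3) ne(1)] and l2 = ln[OF P(2) P(4) ne(2)]
  have "a = a'"
  proof (rule ccontr)
    assume "a \<noteq> a'"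
    then have "l = ln a b" using two_pts[OF P(1) P(2) _ l I(1) I(2) l1(1)] l1 l2 e by metis
    then show False using l1 I by simp
  qed
  moreover have "b = b'"
  proof (rule ccontr)
    assume "b \<noteq> b'"
    then have "m = ln a b" using two_pts[OF P(3) P(4) _ m I(3) I(4) l1(1)] l1 l2 e by metis
    then show False using l1 I by simp
  qed
  ultimately show ?thesis by simp
qed

lemma emb_props:
  assumes \<phi>: "\<phi> \<in> embeddings P L inc (K_V s t) (K_E s t)"
  defines "A \<equiv> \<phi> ` Inl ` {..<s}" and "B \<equiv> \<phi> ` Inr ` {..<t}"
  shows "A \<subseteq> P" "B \<subseteq> P" "A \<inter> B = {}" "card A = s" "card B = t"
    "\<forall>a\<in>A. \<forall>a'\<in>A. \<forall>b\<in>B. \<forall>b'\<in>B. ln a b = ln a' b' \<longrightarrow> a = a' \<and> b = b'"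
proof -
  let ?V = "K_V s t"
  have inj: "inj_on \<phi> ?V" and sub: "\<phi> ` ?V \<subseteq> P" and ie: "inj_on (edge_line L inc \<phi>) (K_E s t)"
    using \<phi> unfolding embeddings_def is_embedding_def by auto
  have VL: "Inl ` {..<s} \<subseteq> ?V" and VR: "Inr ` {..<t} \<subseteq> ?V" unfolding K_V_def by auto
  show "A \<subseteq> P" using image_mono[OF VL, of \<phi>] sub unfolding A_def by blast
  show "B \<subseteq> P" using image_mono[OF VR, of \<phi>] sub unfolding B_def by blast
  show "A \<inter> B = {}" unfolding A_def B_def
    using inj_on_image_Int[OF inj VL VR] by auto
  show "card A = s" unfolding A_def
    using card_image[OF inj_on_subset[OF inj VL]] by (simp add: card_image)
  show "card B = t" unfolding B_def
    using card_image[OF inj_on_subset[OF inj VR]] by (simp add: card_image)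
  show "\<forall>a\<in>A. \<forall>a'\<in>A. \<forall>b\<in>B. \<forall>b'\<in>B. ln a b = ln a' b' \<longrightarrow> a = a' \<and> b = b'"
  proof (intro ballI impI)
    fix a a' b b' assume "a \<in> A" "a' \<in> A" "b \<in> B" "b' \<in> B" and e: "ln a b = ln a' b'"
    then obtain i i' j j' where ij: "i < s" "i' < s" "j < t" "j' < t"
      and abs: "a = \<phi> (Inl i)" "a' = \<phi> (Inl i')" "b = \<phi> (Inr j)" "b' = \<phi> (Inr j')"
      unfolding A_def B_def by auto
    have inV: "Inl i \<in> ?V" "Inl i' \<in> ?V" "Inr j \<in> ?V" "Inr j' \<in> ?V" using ij unfolding K_V_def by auto
    have d1: "\<phi> (Inl i) \<noteq> \<phi> (Inr j)" using inj_onD[OF inj _ inV(1) inV(3)] by auto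
    have d2: "\<phi> (Inl i') \<noteq> \<phi> (Inr j')" using inj_onD[OF inj _ inV(2) inV(4)] by auto
    have inP: "\<phi> (Inl i) \<in> P" "\<phi> (Inl i') \<in> P" "\<phi> (Inr j) \<in> P" "\<phi> (Inr j') \<in> P"
      using sub inV by auto
    have E: "{Inl i, Inr j} \<in> K_E s t" "{Inl i', Inr j'} \<in> K_E s t" unfolding K_E_def using ij by auto
    have "edge_line L inc \<phi> {Inl i, Inr j} = edge_line L inc \<phi> {Inl i', Inr j'}"
      using edge_line_eq[of \<phi> "Inl i" "Inr j", OF inP(1) inP(3) d1] edge_line_eq[of \<phi> "Inl i'" "Inr j'", OF inP(2) inP(4) d2] e abs by simp
    then have "{Inl i, Inr j} = {Inl i', Inr j' :: nat + nat}" using inj_onD[OF ie _ E(1) E(2)] by simp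
    then have "i = i'" "j = j'" by (auto simp: doubleton_eq_iff)
    then show "a = a' \<and> b = b'" using abs by simp
  qed
qed

lemma F_image:
  assumes n1: "1 \<le> n" and q: "q = (n+1)^2" and st: "s \<le> q" "t \<le> q" "q - n < s" "q - n < t"
  shows "FF s t ` embeddings P L inc (K_V s t) (K_E s t) = (\<lambda>(A,B). {A,B}) ` Opairs s t"
proof
  have qn: "q = n*n + 2*n + 1" using q by (simp add: power2_eq_square algebra_simps)
  have s2: "2 \<le> s" and t2: "2 \<le> t" using st qn by linarith+
  show "FF s t ` embeddings P L inc (K_V s t) (K_E s t) \<subseteq> (\<lambda>(A,B). {A,B}) ` Opairs s t"
  proof
    fix X assume "X \<in> FF s t ` embeddings P L inc (K_V s t) (K_E s t)"
    then obtain \<phi> where \<phi>: "\<phi> \<in> embeddings P L inc (K_V s t) (K_E s t)" and X: "X = FF s t \<phi>" by blast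
    define A where "A = \<phi> ` Inl ` {..<s}"
    define B where "B = \<phi> ` Inr ` {..<t}"
    note pr = emb_props[OF \<phi>, folded A_def B_def]
    have AP: "A \<subseteq> P" and BP: "B \<subseteq> P" and AB: "A \<inter> B = {}" using pr(1-3) .
    have BA: "B \<inter> A = {}" using AB by blast
    have gd: "\<And>a a' b b'. a \<in> A \<Longrightarrow> a' \<in> A \<Longrightarrow> b \<in> B \<Longrightarrow> b' \<in> B \<Longrightarrow> ln a b = ln a' b' \<Longrightarrow> a = a' \<and> b = b'"
      using pr(6) by blast
    have finA: "finite A" using AP finP finite_subset by blast
    have finB: "finite B" using BP finP finite_subset by blast
    have cA: "q - n < card A" using pr(4) st by simp
    have cB: "q - n < card B" using pr(5) st by simp
    have neAB: "x \<in> A \<Longrightarrow> y \<in> B \<Longrightarrow> x \<noteq> y" for x y using AB by blast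
    have inPA: "x \<in> A \<Longrightarrow> x \<in> P" for x using AP by blast
    have inPB: "x \<in> B \<Longrightarrow> x \<in> P" for x using BP by blast
    have goodBA: "\<forall>b\<in>B. \<forall>b'\<in>B. \<forall>a\<in>A. \<forall>a'\<in>A. ln b a = ln b' a' \<longrightarrow> b = b' \<and> a = a'"
    proof (intro ballI impI)
      fix b b' a a' assume h: "b \<in> B" "b' \<in> B" "a \<in> A" "a' \<in> A" "ln b a = ln b' a'"
      have e1: "ln a b = ln b a" by (rule ln_sym[OF inPA[OF h(3)] inPB[OF h(1)] neAB[OF h(3) h(1)]])
      have e2: "ln a' b' = ln b' a'" by (rule ln_sym[OF inPA[OF h(4)] inPB[OF h(2)] neAB[OF h(4) h(2)]])
      have "ln a b = ln a' b'" using e1 e2 h(5) by simp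
      then have "a = a' \<and> b = b'" by (rule gd[OF h(3) h(4) h(1) h(2)])
      then show "b = b' \<and> a = a'" by simp
    qed
    obtain m where m: "m \<in> L" "B \<subseteq> pts m"
      using collinear[OF n1 q AP finA cA BP cB AB pr(6)] by blast
    obtain l where l: "l \<in> L" "A \<subseteq> pts l"
      using collinear[OF n1 q BP finB cB AP cA BA goodBA] by blast
    obtain a1 a2 where a: "a1 \<in> A" "a2 \<in> A" "a1 \<noteq> a2" using two_elems[of A] pr(4) s2 by auto
    obtain b1 b2 where b: "b1 \<in> B" "b2 \<in> B" "b1 \<noteq> b2" using two_elems[of B] pr(5) t2 by auto
    have onl: "x \<in> A \<Longrightarrow> inc x l" for x using l unfolding pts_def by blast
    have onm: "x \<in> B \<Longrightarrow> inc x m" for x using m unfolding pts_def by blast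
    have lnA: "ln x y = k" if "x \<in> A" "y \<in> B" "k \<in> L" "inc x k" "inc y k" for x y k
      using ln_unique[OF inPA[OF that(1)] inPB[OF that(2)] neAB[OF that(1,2)] that(3-5)] by simp
    have lm: "l \<noteq> m"
    proof
      assume "l = m"
      then have "ln a1 b1 = l" "ln a2 b1 = l"
        using lnA[OF a(1) b(1) l(1) onl[OF a(1)]] lnA[OF a(2) b(1) l(1) onl[OF a(2)]] onm[OF b(1)] by auto
      then have "a1 = a2" using gd[OF a(1) a(2) b(1) b(1)] by simp
      then show False using a(3) by simp
    qed
    have Am: "\<not> inc x m" if x: "x \<in> A" for x
    proof
      assume xm: "inc x m"
      have "ln x b1 = m" "ln x b2 = m"
        using lnA[OF x b(1) m(1) xm onm[OF b(1)]] lnA[OF x b(2) m(1) xm onm[OF b(2)]] by auto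
      then have "b1 = b2" using gd[OF x x b(1) b(2)] by simp
      then show False using b(3) by simp
    qed
    have Bl: "\<not> inc x l" if x: "x \<in> B" for x
    proof
      assume xl: "inc x l"
      have "ln a1 x = l" "ln a2 x = l"
        using lnA[OF a(1) x l(1) onl[OF a(1)] xl] lnA[OF a(2) x l(1) onl[OF a(2)] xl] by auto
      then have "a1 = a2" using gd[OF a(1) a(2) x x] by simp
      then show False using a(3) by simp
    qed
    have A': "A \<subseteq> pts l - pts m" using l(2) Am unfolding pts_def by blast
    have B': "B \<subseteq> pts m - pts l" using m(2) Bl unfolding pts_def by blast
    have "(A,B) \<in> Opairs s t" unfolding Opairs_def
      using l(1) m(1) lm A' B' pr(4) pr(5) by blast
    moreover have "X = {A,B}" unfolding X FF_def A_def B_def ..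
    ultimately show "X \<in> (\<lambda>(A,B). {A,B}) ` Opairs s t"
      by (intro image_eqI[where x="(A,B)"]) simp_all
  qed
next
  show "(\<lambda>(A,B). {A,B}) ` Opairs s t \<subseteq> FF s t ` embeddings P L inc (K_V s t) (K_E s t)"
  proof
    fix X assume "X \<in> (\<lambda>(A,B). {A,B}) ` Opairs s t"
    then obtain Y where Y: "Y \<in> Opairs s t" and XY: "X = (\<lambda>(A,B). {A,B}) Y" by (rule imageE)
    obtain A B where YAB: "Y = (A,B)" by (cases Y)
    have X: "X = {A,B}" using XY YAB by simp
    have AB0: "\<exists>l\<in>L. \<exists>m\<in>L. l \<noteq> m \<and> A \<subseteq> pts l - pts m \<and> B \<subseteq> pts m - pts l \<and> card A = s \<and> card B = t"
      using Y YAB unfolding Opairs_def by simp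
    then obtain l m where l: "l \<in> L" and m: "m \<in> L" and lm: "l \<noteq> m"
      and A: "A \<subseteq> pts l - pts m" and B: "B \<subseteq> pts m - pts l" and cA: "card A = s" and cB: "card B = t"
      by blast
    have AP: "A \<subseteq> P" and BP: "B \<subseteq> P" using A B unfolding pts_def by blast+
    have finA: "finite A" using AP finP finite_subset by blast
    have finB: "finite B" using BP finP finite_subset by blast
    have AB: "A \<inter> B = {}" using A B by blast
    have e0: "{0..<k} = {..<k}" for k :: nat by auto
    obtain g where g: "bij_betw g {..<s} A" using ex_bij_betw_nat_finite[OF finA] unfolding cA e0 by blast
    obtain h where h: "bij_betw h {..<t} B" using ex_bij_betw_nat_finite[OF finB] unfolding cB e0 by blast
    let ?V = "K_V s t"
    define \<phi> where "\<phi> = restrict (case_sum g h) ?V"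
    have \<phi>l: "i < s \<Longrightarrow> \<phi> (Inl i) = g i" for i unfolding \<phi>_def K_V_def by auto
    have \<phi>r: "j < t \<Longrightarrow> \<phi> (Inr j) = h j" for j unfolding \<phi>_def K_V_def by auto
    have gA: "i < s \<Longrightarrow> g i \<in> A" for i using g bij_betwE by blast
    have hB: "j < t \<Longrightarrow> h j \<in> B" for j using h bij_betwE by blast
    have ginj: "inj_on g {..<s}" and hinj: "inj_on h {..<t}" using g h bij_betw_def by blast+
    have img1: "\<phi> ` Inl ` {..<s} = A"
    proof -
      have "\<phi> ` Inl ` {..<s} = (\<lambda>i. \<phi> (Inl i)) ` {..<s}" by (simp add: image_image)
      also have "\<dots> = g ` {..<s}" by (rule image_cong) (simp_all add: \<phi>l)
      also have "\<dots> = A" using g by (simp add: bij_betw_def)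
      finally show ?thesis .
    qed
    have img2: "\<phi> ` Inr ` {..<t} = B"
    proof -
      have "\<phi> ` Inr ` {..<t} = (\<lambda>i. \<phi> (Inr i)) ` {..<t}" by (simp add: image_image)
      also have "\<dots> = h ` {..<t}" by (rule image_cong) (simp_all add: \<phi>r)
      also have "\<dots> = B" using h by (simp add: bij_betw_def)
      finally show ?thesis .
    qed
    have inj: "inj_on \<phi> ?V"
    proof (rule inj_onI)
      fix u v assume u: "u \<in> ?V" and v: "v \<in> ?V" and e: "\<phi> u = \<phi> v"
      show "u = v"
      proof (cases u; cases v)
        fix i j assume uv: "u = Inl i" "v = Inl j"
        have ij: "i < s" "j < s" using u v uv unfolding K_V_def by auto
        have "g i = g j" using \<phi>l[OF ij(1)] \<phi>l[OF ij(2)] e unfolding uv by simp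
        then have "i = j" using inj_onD[OF ginj] ij by simp
        then show ?thesis using uv by simp
      next
        fix i j assume uv: "u = Inl i" "v = Inr j"
        have ij: "i < s" "j < t" using u v uv unfolding K_V_def by auto
        have "g i = h j" using \<phi>l[OF ij(1)] \<phi>r[OF ij(2)] e unfolding uv by simp
        then have "g i \<in> A \<inter> B" using gA[OF ij(1)] hB[OF ij(2)] by simp
        then show ?thesis using AB by simp
      next
        fix i j assume uv: "u = Inr i" "v = Inl j"
        have ij: "i < t" "j < s" using u v uv unfolding K_V_def by auto
        have "h i = g j" using \<phi>r[OF ij(1)] \<phi>l[OF ij(2)] e unfolding uv by simp
        then have "g j \<in> A \<inter> B" using gA[OF ij(2)] hB[OF ij(1)] by simp
        then show ?thesis using AB by simp
      next
        fix i j assume uv: "u = Inr i" "v = Inr j"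
        have ij: "i < t" "j < t" using u v uv unfolding K_V_def by auto
        have "h i = h j" using \<phi>r[OF ij(1)] \<phi>r[OF ij(2)] e unfolding uv by simp
        then have "i = j" using inj_onD[OF hinj] ij by simp
        then show ?thesis using uv by simp
      qed
    qed
    have sub: "\<phi> ` ?V \<subseteq> P"
    proof -
      have "\<phi> ` ?V = \<phi> ` Inl ` {..<s} \<union> \<phi> ` Inr ` {..<t}" unfolding K_V_def by (simp add: image_Un)
      then show ?thesis using img1 img2 AP BP by simp
    qed
    have el: "edge_line L inc \<phi> {Inl i, Inr j} = ln (g i) (h j)" if ij: "i < s" "j < t" for i j
    proof -
      have ne: "\<phi> (Inl i) \<noteq> \<phi> (Inr j)" using gA[OF ij(1)] hB[OF ij(2)] AB \<phi>l[OF ij(1)] \<phi>r[OF ij(2)] by auto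
      have p1: "\<phi> (Inl i) \<in> P" using gA[OF ij(1)] AP \<phi>l[OF ij(1)] by auto
      have p2: "\<phi> (Inr j) \<in> P" using hB[OF ij(2)] BP \<phi>r[OF ij(2)] by auto
      show ?thesis using edge_line_eq[of \<phi> "Inl i" "Inr j", OF p1 p2 ne] \<phi>l[OF ij(1)] \<phi>r[OF ij(2)] by simp
    qed
    have ie: "inj_on (edge_line L inc \<phi>) (K_E s t)"
    proof (rule inj_onI)
      fix e e' assume "e \<in> K_E s t" "e' \<in> K_E s t" and ee: "edge_line L inc \<phi> e = edge_line L inc \<phi> e'"
      then obtain i j i' j' where ij: "i < s" "j < t" "i' < s" "j' < t"
        and e: "e = {Inl i, Inr j}" "e' = {Inl i', Inr j'}" unfolding K_E_def by blast
      have "ln (g i) (h j) = ln (g i') (h j')" using ee e el ij by simp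
      then have "g i = g i' \<and> h j = h j'"
        by (rule good_lines[OF l m A B gA[OF ij(1)] gA[OF ij(3)] hB[OF ij(2)] hB[OF ij(4)]])
      then have "i = i'" "j = j'" using inj_onD[OF ginj] inj_onD[OF hinj] ij by auto
      then show "e = e'" using e by simp
    qed
    have "\<phi> \<in> embeddings P L inc ?V (K_E s t)"
      unfolding embeddings_def is_embedding_def using inj sub ie by (simp add: \<phi>_def)
    moreover have "FF s t \<phi> = X" unfolding FF_def img1 img2 X ..
    ultimately show "X \<in> FF s t ` embeddings P L inc ?V (K_E s t)" by blast
  qed
qed

end


lemma two_choose2: "2 * (n choose 2) = n * (n - 1)"
proof (induction n)
  case 0 then show ?case by simp
next
  case (Suc n)
  have "Suc n choose 2 = n + (n choose 2)"
    using binomial_Suc_Suc[of n 1] by (simp add: numeral_2_eq_2)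
  then show ?case using Suc by (cases n) (simp_all add: algebra_simps)
qed

context pp begin

lemma card_Opairs:
  assumes s2: "2 \<le> s" and t2: "2 \<le> t"
  shows "card (Opairs s t) = (card L * card L - card L) * (q choose s) * (q choose t)"
proof -
  define Off where "Off = (L \<times> L) - (\<lambda>l. (l,l)) ` L"
  define Fam where "Fam lm = {A. A \<subseteq> pts (fst lm) - pts (snd lm) \<and> card A = s} \<times>
      {B. B \<subseteq> pts (snd lm) - pts (fst lm) \<and> card B = t}" for lm
  have eq: "Opairs s t = (\<Union>lm\<in>Off. Fam lm)"
  proof (rule set_eqI)
    fix x :: "'p set \<times> 'p set"
    obtain A B where x: "x = (A,B)" by (cases x)
    have "x \<in> Opairs s t \<longleftrightarrow> (\<exists>l\<in>L. \<exists>m\<in>L. l \<noteq> m \<and> A \<subseteq> pts l - pts m \<and> B \<subseteq> pts m - pts l \<and> card A = s \<and> card B = t)"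
      unfolding Opairs_def x by simp
    also have "\<dots> \<longleftrightarrow> (\<exists>lm\<in>Off. x \<in> Fam lm)"
    proof
      assume "\<exists>l\<in>L. \<exists>m\<in>L. l \<noteq> m \<and> A \<subseteq> pts l - pts m \<and> B \<subseteq> pts m - pts l \<and> card A = s \<and> card B = t"
      then obtain l m where h: "l \<in> L" "m \<in> L" "l \<noteq> m" "A \<subseteq> pts l - pts m" "B \<subseteq> pts m - pts l" "card A = s" "card B = t"
        by blast
      have "(l,m) \<in> Off" unfolding Off_def using h(1-3) by auto
      moreover have "x \<in> Fam (l,m)" unfolding Fam_def x using h(4-7) by simp
      ultimately show "\<exists>lm\<in>Off. x \<in> Fam lm" by blast
    next
      assume "\<exists>lm\<in>Off. x \<in> Fam lm"
      then obtain l m where lm: "(l,m) \<in> Off" and xf: "x \<in> Fam (l,m)" by auto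
      have h1: "l \<in> L" "m \<in> L" "l \<noteq> m" using lm unfolding Off_def by auto
      have h2: "A \<subseteq> pts l - pts m" "B \<subseteq> pts m - pts l" "card A = s" "card B = t"
        using xf unfolding Fam_def x by simp_all
      show "\<exists>l\<in>L. \<exists>m\<in>L. l \<noteq> m \<and> A \<subseteq> pts l - pts m \<and> B \<subseteq> pts m - pts l \<and> card A = s \<and> card B = t"
        using h1 h2 by blast
    qed
    also have "\<dots> \<longleftrightarrow> x \<in> (\<Union>lm\<in>Off. Fam lm)" by simp
    finally show "x \<in> Opairs s t \<longleftrightarrow> x \<in> (\<Union>lm\<in>Off. Fam lm)" .
  qed
  have finOff: "finite Off" unfolding Off_def using finL by simp
  have finpts: "finite (pts l)" for l unfolding pts_def using finP by simp
  have cFam: "card (Fam lm) = (q choose s) * (q choose t)" if "lm \<in> Off" for lm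
  proof -
    obtain l m where lm: "lm = (l,m)" by (cases lm)
    have h: "l \<in> L" "m \<in> L" "l \<noteq> m" using that unfolding Off_def lm by auto
    have c1: "card {A. A \<subseteq> pts l - pts m \<and> card A = s} = q choose s"
      using n_subsets[of "pts l - pts m" s] finpts card_pts_diff[OF h(1-3)] by simp
    have c2: "card {B. B \<subseteq> pts m - pts l \<and> card B = t} = q choose t"
      using n_subsets[of "pts m - pts l" t] finpts card_pts_diff[OF h(2) h(1)] h(3) by simp
    show ?thesis unfolding Fam_def lm using c1 c2 by (simp add: card_cartesian_product)
  qed
  have finFam: "finite (Fam lm)" for lm
  proof -
    have "Fam lm \<subseteq> Pow (pts (fst lm)) \<times> Pow (pts (snd lm))" unfolding Fam_def by auto
    moreover have "finite (Pow (pts (fst lm)) \<times> Pow (pts (snd lm)))" using finpts by simp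
    ultimately show ?thesis using finite_subset by blast
  qed
  have disj: "Fam lm \<inter> Fam lm' = {}" if "lm \<in> Off" "lm' \<in> Off" "lm \<noteq> lm'" for lm lm'
  proof (rule ccontr)
    assume "Fam lm \<inter> Fam lm' \<noteq> {}"
    then obtain A B where AB: "(A,B) \<in> Fam lm" "(A,B) \<in> Fam lm'" by auto
    obtain l m where lm: "lm = (l,m)" by (cases lm)
    obtain l' m' where lm': "lm' = (l',m')" by (cases lm')
    have L1: "l \<in> L" "m \<in> L" "l' \<in> L" "m' \<in> L" using that unfolding Off_def lm lm' by auto
    have A: "A \<subseteq> pts l" "A \<subseteq> pts l'" "card A = s" and B: "B \<subseteq> pts m" "B \<subseteq> pts m'" "card B = t"
      using AB unfolding Fam_def lm lm' by auto
    obtain a1 a2 where a: "a1 \<in> A" "a2 \<in> A" "a1 \<noteq> a2" using two_elems[of A] A(3) s2 by auto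
    obtain b1 b2 where b: "b1 \<in> B" "b2 \<in> B" "b1 \<noteq> b2" using two_elems[of B] B(3) t2 by auto
    have ap: "a1 \<in> P" "a2 \<in> P" "inc a1 l" "inc a2 l" "inc a1 l'" "inc a2 l'"
      using a A unfolding pts_def by auto
    have bp: "b1 \<in> P" "b2 \<in> P" "inc b1 m" "inc b2 m" "inc b1 m'" "inc b2 m'"
      using b B unfolding pts_def by auto
    have "l = l'" by (rule two_pts[OF ap(1,2) a(3) L1(1) ap(3,4) L1(3) ap(5,6)])
    moreover have "m = m'" by (rule two_pts[OF bp(1,2) b(3) L1(2) bp(3,4) L1(4) bp(5,6)])
    ultimately show False using that(3) lm lm' by simp
  qed
  have "card (Opairs s t) = (\<Sum>lm\<in>Off. card (Fam lm))"
    unfolding eq by (rule card_UN_disjoint[OF finOff]) (use finFam disj in auto)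
  also have "\<dots> = (\<Sum>lm\<in>Off. (q choose s) * (q choose t))" using cFam by simp
  also have "\<dots> = card Off * ((q choose s) * (q choose t))" by simp
  also have "card Off = card L * card L - card L"
  proof -
    have sub: "(\<lambda>l. (l,l)) ` L \<subseteq> L \<times> L" by auto
    have "card ((\<lambda>l. (l,l)) ` L) = card L" by (rule card_image) (auto simp: inj_on_def)
    then show ?thesis unfolding Off_def
      using card_Diff_subset[OF finite_imageI[OF finL] sub] by (simp add: card_cartesian_product)
  qed
  finally show ?thesis by (simp add: mult.assoc)
qed

lemma finite_Opairs: "finite (Opairs s t)"
proof -
  have "Opairs s t \<subseteq> Pow P \<times> Pow P" unfolding Opairs_def pts_def by auto
  then show ?thesis using finP finite_subset by blast
qed

end


context pp begin

lemma n_pi_eq: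
  assumes n1: "1 \<le> n" and q: "q = (n+1)^2" and st: "s \<le> q" "t \<le> q" "q - n < s" "q - n < t"
  shows "n_pi P L inc (K_V s t) (K_E s t) = card ((\<lambda>(A,B). {A,B}) ` Opairs s t)"
proof -
  have s0: "0 < s" using st by simp
  have "n_pi P L inc (K_V s t) (K_E s t) = card (FF s t ` embeddings P L inc (K_V s t) (K_E s t))"
    unfolding n_pi_def
  proof (rule card_quotient_fun)
    show "emb_equiv P L inc (K_V s t) (K_E s t) \<subseteq> embeddings P L inc (K_V s t) (K_E s t) \<times> embeddings P L inc (K_V s t) (K_E s t)"
      unfolding emb_equiv_def by auto
    show "(x, y) \<in> emb_equiv P L inc (K_V s t) (K_E s t) \<longleftrightarrow> FF s t x = FF s t y"
      if "x \<in> embeddings P L inc (K_V s t) (K_E s t)" "y \<in> embeddings P L inc (K_V s t) (K_E s t)" for x y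
      by (rule equiv_iff[OF s0 that])
  qed
  also have "\<dots> = card ((\<lambda>(A,B). {A,B}) ` Opairs s t)" using F_image[OF n1 q st] by simp
  finally show ?thesis .
qed

lemma card_img_neq:
  assumes "s \<noteq> t"
  shows "card ((\<lambda>(A,B). {A,B}) ` Opairs s t) = card (Opairs s t)"
proof (rule card_image, rule inj_onI)
  fix x y assume x: "x \<in> Opairs s t" and y: "y \<in> Opairs s t"
    and e: "(\<lambda>(A,B). {A,B}) x = (\<lambda>(A,B). {A,B}) y"
  obtain A B where xAB: "x = (A,B)" by (cases x)
  obtain A' B' where yAB: "y = (A',B')" by (cases y)
  have c: "card A = s" "card B = t" "card A' = s" "card B' = t"
    using x y unfolding xAB yAB Opairs_def by auto
  have "{A,B} = {A',B'}" using e xAB yAB by simp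
  then have "(A = A' \<and> B = B') \<or> (A = B' \<and> B = A')" by (simp add: doubleton_eq_iff)
  then show "x = y"
  proof
    assume "A = B' \<and> B = A'"
    then have "s = t" using c by simp
    then show ?thesis using assms by simp
  qed (simp add: xAB yAB)
qed

lemma card_img_eq:
  assumes s2: "2 \<le> s"
  shows "card (Opairs s s) = 2 * card ((\<lambda>(A,B). {A,B}) ` Opairs s s)"
proof (rule card_sym_pairs[OF finite_Opairs])
  fix A B assume "(A,B) \<in> Opairs s s"
  then obtain l m where h: "l \<in> L" "m \<in> L" "l \<noteq> m" "A \<subseteq> pts l - pts m" "B \<subseteq> pts m - pts l" "card A = s" "card B = s"
    unfolding Opairs_def by blast
  have "\<exists>l'\<in>L. \<exists>m'\<in>L. l' \<noteq> m' \<and> B \<subseteq> pts l' - pts m' \<and> A \<subseteq> pts m' - pts l' \<and> card B = s \<and> card A = s"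
    using h(2,1) h(3)[symmetric] h(5,4,7,6) by blast
  then show "(B,A) \<in> Opairs s s" unfolding Opairs_def by simp
  show "A \<noteq> B"
  proof
    assume "A = B"
    then have "A = {}" using h(4,5) by blast
    then show False using h(6) s2 by simp
  qed
qed

end

theorem corollary4p6:
  fixes P :: "'p set" and L :: "'l set" and inc :: "'p \<Rightarrow> 'l \<Rightarrow> bool"
    and q n s t :: nat
  assumes "projective_plane P L inc q"
    and "q = (n + 1)^2"
    and "s \<le> q" and "t \<le> q" and "q - n < s" and "q - n < t"
  shows "(s \<noteq> t \<longrightarrow> n_pi P L inc (K_V s t) (K_E s t)
            = 2 * ((q^2 + q + 1) choose 2) * (q choose s) * (q choose t))
       \<and> n_pi P L inc (K_V s s) (K_E s s) = ((q^2 + q + 1) choose 2) * (q choose s)^2"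
proof -
  interpret pp P L inc q by (rule pp.intro) (rule assms(1))
  have q: "q = (n+1)^2" using assms(2) .
  have qn: "q = n*n + 2*n + 1" using q by (simp add: power2_eq_square algebra_simps)
  have n1: "1 \<le> n"
  proof (rule ccontr)
    assume "\<not> 1 \<le> n"
    then have "n = 0" by simp
    then show False using assms(3,5) qn by simp
  qed
  have s2: "2 \<le> s" and t2: "2 \<le> t" using assms(5,6) qn by linarith+
  define N where "N = q^2 + q + 1"
  have cL: "card L = N" unfolding N_def using cardL .
  have NN: "N * N - N = 2 * (N choose 2)"
    using two_choose2[of N] by (simp add: algebra_simps diff_mult_distrib2)
  have part1: "n_pi P L inc (K_V s t) (K_E s t) = 2 * (N choose 2) * (q choose s) * (q choose t)"
    if "s \<noteq> t"
  proof -
    have "n_pi P L inc (K_V s t) (K_E s t) = card (Opairs s t)"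
      using n_pi_eq[OF n1 q assms(3-6)] card_img_neq[OF that] by simp
    also have "\<dots> = (N * N - N) * (q choose s) * (q choose t)"
      using card_Opairs[OF s2 t2] cL by simp
    finally show ?thesis using NN by simp
  qed
  have part2: "n_pi P L inc (K_V s s) (K_E s s) = (N choose 2) * (q choose s)^2"
  proof -
    have "2 * n_pi P L inc (K_V s s) (K_E s s) = card (Opairs s s)"
      using n_pi_eq[OF n1 q assms(3) assms(3) assms(5) assms(5)] card_img_eq[OF s2] by simp
    also have "\<dots> = (N * N - N) * (q choose s) * (q choose s)"
      using card_Opairs[OF s2 s2] cL by simp
    also have "\<dots> = 2 * ((N choose 2) * (q choose s)^2)"
      using NN by (simp add: power2_eq_square)
    finally show ?thesis by simp
  qed
  show ?thesis using part1 part2 unfolding N_def by simp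
qed


end
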